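(* Let $(\mathbf{i},\mathbf{a})\in I^m\times\mathbb{C}^m$, let $\pi\in S_m$ be $(\mathbf{i},\mathbf{a})$-admissible, and let $1\le k<m$ with $\ell(\pi s_k)<\ell(\pi)$, where $\ell$ is the Coxeter length and $s_k=(k,k+1)$. Then $s_k$ is $(s_k(\mathbf{i}),s_k(\mathbf{a}))$-admissible.
   Context: $I$ is the vertex set of a finite simple bipartite graph $I=I_{\bar0}\sqcup I_{\bar1}$, with every edge oriented from its even to its odd endpoint; write $i\leftarrow j$ if there is an oriented edge from $j$ to $i$. $S_m$ acts on $m$-tuples by $\pi(\mathbf{a})=(a_{\pi^{-1}(1)},\dots,a_{\pi^{-1}(m)})$. For $(\mathbf{i},\mathbf{a})\in I^m\times\mathbb{C}^m$, distinct indices $k,l$ are not $(\mathbf{i},\mathbf{a})$-switchable if $i_k\leftarrow i_l$ and $a_k=a_l+1$ (checked for the pair in either order), and switchable otherwise. $\pi\in S_m$ is $(\mathbf{i},\mathbf{a})$-admissible if for every non-switchable pair $k,l$, $\pi(k),\pi(l)$ are in the same relative order as $k,l$. *)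

theory Defs
  imports "HOL-Combinatorics.Combinatorics" Complex_Main
begin

text \<open>A finite simple bipartite graph on vertex set I = I0 (even) disjoint-union I1 (odd),
  given by a parity predicate (True = odd) and a symmetric irreflexive edge relation,
  all edges joining vertices of different parity.\<close>
definition bipartite_graph :: "'v set \<Rightarrow> ('v \<Rightarrow> bool) \<Rightarrow> ('v \<Rightarrow> 'v \<Rightarrow> bool) \<Rightarrow> bool" where
  "bipartite_graph I par E \<longleftrightarrow> finite I \<and>
     (\<forall>x y. E x y \<longrightarrow> x \<in> I \<and> y \<in> I) \<and>
     (\<forall>x y. E x y \<longrightarrow> E y x) \<and> (\<forall>x. \<not> E x x) \<and>
     (\<forall>x y. E x y \<longrightarrow> par x \<noteq> par y)"

text \<open>Edges oriented from even to odd endpoint; arrow i j means i <- j,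
  i.e. there is an oriented edge from j to i.\<close>
definition arrow :: "('v \<Rightarrow> bool) \<Rightarrow> ('v \<Rightarrow> 'v \<Rightarrow> bool) \<Rightarrow> 'v \<Rightarrow> 'v \<Rightarrow> bool" where
  "arrow par E i j \<longleftrightarrow> E j i \<and> \<not> par j \<and> par i"

text \<open>m-tuples are functions on positions {1..m}; S_m = permutations of {1..m}.
  Action: pi(a) = a o pi^-1.\<close>
definition act :: "(nat \<Rightarrow> nat) \<Rightarrow> (nat \<Rightarrow> 'b) \<Rightarrow> nat \<Rightarrow> 'b" where
  "act \<pi> a = a \<circ> inv \<pi>"

definition switchable ::
  "('v \<Rightarrow> bool) \<Rightarrow> ('v \<Rightarrow> 'v \<Rightarrow> bool) \<Rightarrow> (nat \<Rightarrow> 'v) \<Rightarrow> (nat \<Rightarrow> complex) \<Rightarrow> nat \<Rightarrow> nat \<Rightarrow> bool" where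
  "switchable par E i a k l \<longleftrightarrow>
     \<not> ((arrow par E (i k) (i l) \<and> a k = a l + 1) \<or> (arrow par E (i l) (i k) \<and> a l = a k + 1))"

definition admissible ::
  "('v \<Rightarrow> bool) \<Rightarrow> ('v \<Rightarrow> 'v \<Rightarrow> bool) \<Rightarrow> nat \<Rightarrow> (nat \<Rightarrow> 'v) \<Rightarrow> (nat \<Rightarrow> complex) \<Rightarrow> (nat \<Rightarrow> nat) \<Rightarrow> bool" where
  "admissible par E m i a \<pi> \<longleftrightarrow>
     (\<forall>k\<in>{1..m}. \<forall>l\<in>{1..m}. k \<noteq> l \<and> \<not> switchable par E i a k l \<longrightarrow>
        (k < l \<longleftrightarrow> \<pi> k < \<pi> l))"

definition coxeter_length :: "nat \<Rightarrow> (nat \<Rightarrow> nat) \<Rightarrow> nat" where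
  "coxeter_length m \<pi> = card {(k, l). k \<in> {1..m} \<and> l \<in> {1..m} \<and> k < l \<and> \<pi> k > \<pi> l}"

end

theory Submission
  imports Defs
begin

lemma len_mono:
  fixes \<pi> :: "nat \<Rightarrow> nat"
  assumes "1 \<le> k" "k < m" "\<pi> k < \<pi> (k+1)"
  shows "coxeter_length m \<pi> \<le> coxeter_length m (\<pi> \<circ> Transposition.transpose k (k+1))"
proof -
  let ?s = "Transposition.transpose k (k+1)"
  let ?A = "{(p, q). p \<in> {1..m} \<and> q \<in> {1..m} \<and> p < q \<and> \<pi> p > \<pi> q}"
  let ?B = "{(p, q). p \<in> {1..m} \<and> q \<in> {1..m} \<and> p < q \<and> (\<pi> \<circ> ?s) p > (\<pi> \<circ> ?s) q}"
  let ?f = "\<lambda>(p,q). (?s p, ?s q)"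
  have inj: "inj_on ?f ?A"
    by (auto simp: inj_on_def dest: transpose_eq_imp_eq)
  have sub: "?f ` ?A \<subseteq> ?B"
  proof
    fix x assume "x \<in> ?f ` ?A"
    then obtain p q where x: "x = (?s p, ?s q)" and pq: "p \<in> {1..m}" "q \<in> {1..m}" "p < q" "\<pi> p > \<pi> q"
      by auto
    have "?s p \<in> {1..m}" "?s q \<in> {1..m}" using pq assms(1,2)
      by (auto simp: Transposition.transpose_def)
    moreover have "?s p < ?s q" using pq assms(3)
      by (auto simp: Transposition.transpose_def)
    moreover have "(\<pi> \<circ> ?s) (?s p) > (\<pi> \<circ> ?s) (?s q)" using pq by simp
    ultimately show "x \<in> ?B" using x by auto
  qed
  have fin: "finite ?B"
    by (rule finite_subset[of _ "{1..m} \<times> {1..m}"]) auto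
  have "card ?A = card (?f ` ?A)" using card_image[OF inj] by simp
  also have "\<dots> \<le> card ?B" using card_mono[OF fin sub] .
  finally show ?thesis unfolding coxeter_length_def by simp
qed

lemma tr_order:
  fixes p q k :: nat
  assumes "{p,q} \<noteq> {k, k+1}" "p \<noteq> q"
  shows "p < q \<longleftrightarrow> Transposition.transpose k (k+1) p < Transposition.transpose k (k+1) q"
proof -
  consider "p = k" | "p = k+1" | "p \<noteq> k \<and> p \<noteq> k+1" by blast
  then show ?thesis
  proof cases
    case 1
    then show ?thesis using assms
      by (cases "q = k+1"; cases "q = k"; simp add: Transposition.transpose_def; linarith)
  next
    case 2
    then show ?thesis using assms
      by (cases "q = k+1"; cases "q = k"; simp add: Transposition.transpose_def insert_commute; linarith)
  next
    case 3
    then show ?thesis using assms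
      by (cases "q = k+1"; cases "q = k"; simp add: Transposition.transpose_def; linarith)
  qed
qed

theorem lemma5p6:
  fixes I :: "'v set" and par :: "'v \<Rightarrow> bool" and E :: "'v \<Rightarrow> 'v \<Rightarrow> bool"
    and m k :: nat and i :: "nat \<Rightarrow> 'v" and a :: "nat \<Rightarrow> complex" and \<pi> :: "nat \<Rightarrow> nat"
  assumes "bipartite_graph I par E"
    and "\<forall>n\<in>{1..m}. i n \<in> I"
    and "\<pi> permutes {1..m}"
    and "admissible par E m i a \<pi>"
    and "1 \<le> k" and "k < m"
    and "coxeter_length m (\<pi> \<circ> Transposition.transpose k (k+1)) < coxeter_length m \<pi>"
  shows "admissible par E m (act (Transposition.transpose k (k+1)) i)
           (act (Transposition.transpose k (k+1)) a) (Transposition.transpose k (k+1))"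
proof -
  let ?s = "Transposition.transpose k (k+1)"
  have gt: "\<not> \<pi> k < \<pi> (k+1)" using len_mono[OF assms(5,6)] assms(7) by fastforce
  have sw: "switchable par E i a k (k+1)"
  proof (rule ccontr)
    assume "\<not> switchable par E i a k (k+1)"
    moreover have "k \<in> {1..m}" "k+1 \<in> {1..m}" using assms(5,6) by auto
    ultimately have "k < k+1 \<longleftrightarrow> \<pi> k < \<pi> (k+1)"
      using assms(4) unfolding admissible_def by (metis n_not_Suc_n Suc_eq_plus1)
    with gt show False by simp
  qed
  have invs: "inv ?s = ?s" by simp
  show ?thesis
    unfolding admissible_def
  proof (intro ballI impI)
    fix p q assume p: "p \<in> {1..m}" and q: "q \<in> {1..m}" and h: "p \<noteq> q \<and> \<not> switchable par E (act ?s i) (act ?s a) p q"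
    show "p < q \<longleftrightarrow> ?s p < ?s q"
    proof (cases "{p,q} = {k, k+1}")
      case True
      then have "(p = k \<and> q = k+1) \<or> (p = k+1 \<and> q = k)" by (auto simp: doubleton_eq_iff)
      then have "switchable par E (act ?s i) (act ?s a) p q"
      proof
        assume "p = k \<and> q = k+1"
        then show ?thesis using sw unfolding act_def invs switchable_def by simp
      next
        assume "p = k+1 \<and> q = k"
        then show ?thesis using sw unfolding act_def invs switchable_def by auto
      qed
      with h show ?thesis by simp
    next
      case False
      then show ?thesis using h by (intro tr_order) auto
    qed
  qed
qed

end
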